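(* Run Algorithm $\mathsf{LAR}$ with parameters $p=\sqrt2-1$ and $\alpha=\sqrt{2+2\sqrt2}$. It uses $O(n)$ queries to $f$ and returns a set $S$ with $c(S)\le B$ and $$\mathrm{opt}\le 16.034\,\mathbb{E}[f(S)],$$ where $\mathrm{opt}=\max\{f(T):T\subseteq V,\ c(T)\le B\}$.
   Context: Setting: $V$ is a finite ground set of size $n$. $f:2^V\to\mathbb{R}_{\ge 0}$ is a non-negative submodular set function with $f(\emptyset)=0$. Each $e\in V$ has a cost $c(e)>0$, and $c(S)=\sum_{e\in S}c(e)$. $B>0$ is a budget, and $c(e)\le B$ for every $e\in V$. A query is one evaluation of $f$ on a set. The notation $f(e\mid S)=f(S\cup\{e\})-f(S)$ is used. Algorithm $\mathsf{LAR}$ on $(f,V,B)$ with parameters $p\in(0,1]$ and $\alpha>0$ runs as follows. 1. Let $e_{\max}\in\arg\max_{e\in V}f(e)$ and $V_1=\{e\in V:c(e)\le B/2\}$. 2. Form $V_p$ by including each $e\in V_1$ independently with probability $p$. Set $S=\emptyset$. 3. Process each $e\in V_p$ once, in an arbitrary fixed order. If $f(e\mid S)/c(e)\ge \alpha f(S)/B$, add $e$ to $S$. 4. Let $S(j)$ denote the set of the last $j$ elements added to $S$. Let $S'$ be the set $S(j)$ of largest cost among those with $0\le j\le|S|$ and $c(S(j))\le B$. 5. Return whichever of $S'$ and $\{e_{\max}\}$ has the larger $f$ value. The expectation is over the random choice of $V_p$. *)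

theory Defs
  imports "HOL-Probability.Probability"
begin

definition cost :: "('a \<Rightarrow> real) \<Rightarrow> 'a set \<Rightarrow> real" where
  "cost c S = (\<Sum>e\<in>S. c e)"

definition nonneg_submodular :: "'a set \<Rightarrow> ('a set \<Rightarrow> real) \<Rightarrow> bool" where
  "nonneg_submodular V f \<longleftrightarrow>
     f {} = 0 \<and> (\<forall>S. S \<subseteq> V \<longrightarrow> f S \<ge> 0) \<and>
     (\<forall>A B. A \<subseteq> V \<longrightarrow> B \<subseteq> V \<longrightarrow> f A + f B \<ge> f (A \<union> B) + f (A \<inter> B))"

definition marg :: "('a set \<Rightarrow> real) \<Rightarrow> 'a \<Rightarrow> 'a set \<Rightarrow> real" where
  "marg f e S = f (S \<union> {e}) - f S"

text \<open>Step 3 (instrumented).  The state is (list of added elements in order of addition,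
  number of queries so far).  Processing an element evaluates f on S \<union> {e} and on S
  (two queries).\<close>
definition lar_step :: "('a set \<Rightarrow> real) \<Rightarrow> ('a \<Rightarrow> real) \<Rightarrow> real \<Rightarrow> real \<Rightarrow>
    'a list \<times> nat \<Rightarrow> 'a \<Rightarrow> 'a list \<times> nat" where
  "lar_step f c B \<alpha> st e =
     (let (L, q) = st; S = set L in
      if marg f e S / c e \<ge> \<alpha> * f S / B then (L @ [e], q + 2) else (L, q + 2))"

definition lar_greedy :: "('a set \<Rightarrow> real) \<Rightarrow> ('a \<Rightarrow> real) \<Rightarrow> real \<Rightarrow> real \<Rightarrow>
    'a list \<Rightarrow> 'a set \<Rightarrow> 'a list \<times> nat" where
  "lar_greedy f c B \<alpha> ord Vp = foldl (lar_step f c B \<alpha>) ([], 0) (filter (\<lambda>e. e \<in> Vp) ord)"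

definition last_added :: "'a list \<Rightarrow> nat \<Rightarrow> 'a set" where
  "last_added L j = set (drop (length L - j) L)"

definition lar_suffix :: "('a \<Rightarrow> real) \<Rightarrow> real \<Rightarrow> 'a list \<Rightarrow> 'a set" where
  "lar_suffix c B L =
     last_added L (ARG_MAX (\<lambda>j. cost c (last_added L j)) j.
                     j \<le> length L \<and> cost c (last_added L j) \<le> B)"

definition e_max :: "'a set \<Rightarrow> ('a set \<Rightarrow> real) \<Rightarrow> 'a" where
  "e_max V f = (ARG_MAX (\<lambda>e. f {e}) e. e \<in> V)"

definition V_half :: "'a set \<Rightarrow> ('a \<Rightarrow> real) \<Rightarrow> real \<Rightarrow> 'a set" where
  "V_half V c B = {e \<in> V. c e \<le> B / 2}"

definition sample_pmf :: "'a set \<Rightarrow> real \<Rightarrow> 'a set pmf" where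
  "sample_pmf V1 p = map_pmf (\<lambda>b. {e \<in> V1. b e}) (Pi_pmf V1 False (\<lambda>_. bernoulli_pmf p))"

text \<open>Step 1 uses |V| queries (f on all singletons),
  step 3 two queries per processed element, step 5 two queries.\<close>
definition lar_run :: "'a set \<Rightarrow> ('a set \<Rightarrow> real) \<Rightarrow> ('a \<Rightarrow> real) \<Rightarrow> real \<Rightarrow> real \<Rightarrow>
    'a list \<Rightarrow> 'a set \<Rightarrow> 'a set \<times> nat" where
  "lar_run V f c B \<alpha> ord Vp =
     (let em = e_max V f;
          (L, q) = lar_greedy f c B \<alpha> ord Vp;
          S' = lar_suffix c B L
      in (if f S' \<ge> f {em} then S' else {em}, card V + q + 2))"

definition LAR :: "'a set \<Rightarrow> ('a set \<Rightarrow> real) \<Rightarrow> ('a \<Rightarrow> real) \<Rightarrow> real \<Rightarrow> real \<Rightarrow> real \<Rightarrow>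
    'a list \<Rightarrow> ('a set \<times> nat) pmf" where
  "LAR V f c B p \<alpha> ord = map_pmf (lar_run V f c B \<alpha> ord) (sample_pmf (V_half V c B) p)"

definition opt :: "'a set \<Rightarrow> ('a set \<Rightarrow> real) \<Rightarrow> ('a \<Rightarrow> real) \<Rightarrow> real \<Rightarrow> real" where
  "opt V f c B = Max {f T | T. T \<subseteq> V \<and> cost c T \<le> B}"

end

theory Submission
  imports Defs
begin

definition passes :: "('a set \<Rightarrow> real) \<Rightarrow> ('a \<Rightarrow> real) \<Rightarrow> real \<Rightarrow> real \<Rightarrow> 'a list \<Rightarrow> 'a \<Rightarrow> bool" where
  "passes f c B \<alpha> L e \<longleftrightarrow> \<alpha> * f (set L) / B \<le> marg f e (set L) / c e"

definition grd :: "('a set \<Rightarrow> real) \<Rightarrow> ('a \<Rightarrow> real) \<Rightarrow> real \<Rightarrow> real \<Rightarrow> 'a list \<Rightarrow> 'a list \<Rightarrow> 'a list" where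
  "grd f c B \<alpha> L xs = foldl (\<lambda>L e. if passes f c B \<alpha> L e then L @ [e] else L) L xs"

lemma grd_Nil[simp]: "grd f c B \<alpha> L [] = L"
  by (simp add: grd_def)

lemma grd_Cons[simp]: "grd f c B \<alpha> L (x # xs) = grd f c B \<alpha> (if passes f c B \<alpha> L x then L @ [x] else L) xs"
  by (simp add: grd_def)

lemma grd_append: "grd f c B \<alpha> L (xs @ ys) = grd f c B \<alpha> (grd f c B \<alpha> L xs) ys"
  by (simp add: grd_def)

lemma lar_step_eq: "lar_step f c B \<alpha> (L, q) x = (if passes f c B \<alpha> L x then (L @ [x], q + 2) else (L, q + 2))"
  by (simp add: lar_step_def passes_def Let_def)

lemma foldl_lar_step: "foldl (lar_step f c B \<alpha>) (L, q) xs = (grd f c B \<alpha> L xs, q + 2 * length xs)"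
proof (induction xs arbitrary: L q)
  case Nil then show ?case by simp
next
  case (Cons x xs)
  show ?case
    by (simp only: foldl_Cons lar_step_eq) (simp add: Cons.IH)
qed

lemma grd_set: "set (grd f c B \<alpha> L xs) \<subseteq> set L \<union> set xs"
  by (induction xs arbitrary: L) (auto, fastforce+)

lemma grd_set2: "set L \<subseteq> set (grd f c B \<alpha> L xs)"
  by (induction xs arbitrary: L) (auto, fastforce+)

lemma grd_distinct: "distinct L \<Longrightarrow> distinct xs \<Longrightarrow> set L \<inter> set xs = {} \<Longrightarrow> distinct (grd f c B \<alpha> L xs)"
  by (induction xs arbitrary: L) auto

locale larL =
  fixes V :: "'a set" and f :: "'a set \<Rightarrow> real" and c :: "'a \<Rightarrow> real" and B \<alpha> :: real
  assumes finV: "finite V" and sub: "nonneg_submodular V f"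
    and cpos: "\<And>e. e \<in> V \<Longrightarrow> c e > 0" and cleB: "\<And>e. e \<in> V \<Longrightarrow> c e \<le> B"
    and Bpos: "B > 0" and apos: "\<alpha> > 0"
begin

lemma f_empty: "f {} = 0" using sub by (simp add: nonneg_submodular_def)
lemma fnn: "S \<subseteq> V \<Longrightarrow> f S \<ge> 0" using sub by (simp add: nonneg_submodular_def)
lemma sm: "X \<subseteq> V \<Longrightarrow> Y \<subseteq> V \<Longrightarrow> f (X \<union> Y) + f (X \<inter> Y) \<le> f X + f Y"
  using sub by (simp add: nonneg_submodular_def)
lemma subadd: "X \<subseteq> V \<Longrightarrow> Y \<subseteq> V \<Longrightarrow> f (X \<union> Y) \<le> f X + f Y"
proof -
  have "X \<inter> Y \<subseteq> V" if "X \<subseteq> V" by (use that in auto)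
  then show "X \<subseteq> V \<Longrightarrow> Y \<subseteq> V \<Longrightarrow> f (X \<union> Y) \<le> f X + f Y"
    using sm[of X Y] fnn[of "X \<inter> Y"] by fastforce
qed

lemma dimret: assumes "S \<subseteq> T" "T \<subseteq> V" "e \<in> V" "e \<notin> T"
  shows "marg f e T \<le> marg f e S"
proof -
  have 1: "(S \<union> {e}) \<union> T = T \<union> {e}" using assms by auto
  have 2: "(S \<union> {e}) \<inter> T = S" using assms by auto
  have "f (T \<union> {e}) + f S \<le> f (S \<union> {e}) + f T"
    using sm[of "S \<union> {e}" T] assms 1 2 by auto
  then show ?thesis by (simp add: marg_def)
qed

lemma union_bound:
  assumes "finite X" "X \<subseteq> V" "S \<subseteq> V"
  shows "f (S \<union> X) \<le> f S + (\<Sum>x\<in>X. marg f x S)"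
  using assms(1,2)
proof (induction X rule: finite_induct)
  case empty then show ?case by simp
next
  case (insert x X)
  have IH: "f (S \<union> X) \<le> f S + (\<Sum>x\<in>X. marg f x S)" using insert by auto
  have "f (S \<union> insert x X) - f (S \<union> X) \<le> marg f x S"
  proof (cases "x \<in> S")
    case True
    then show ?thesis by (simp add: marg_def insert_absorb)
  next
    case False
    have "marg f x (S \<union> X) \<le> marg f x S"
      using dimret[of S "S \<union> X" x] insert False assms by auto
    then show ?thesis by (simp add: marg_def)
  qed
  then show ?case using IH insert by simp
qed

lemma pass_nonneg: assumes "set L \<subseteq> V" "e \<in> V" "passes f c B \<alpha> L e"
  shows "\<alpha> * c e * f (set L) / B \<le> marg f e (set L)" "marg f e (set L) \<ge> 0"
proof -
  have ce: "c e > 0" using cpos assms by auto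
  have "\<alpha> * f (set L) / B * c e \<le> marg f e (set L)"
    using assms(3) ce by (simp add: passes_def pos_le_divide_eq)
  then show 1: "\<alpha> * c e * f (set L) / B \<le> marg f e (set L)" by (simp add: algebra_simps)
  have "\<alpha> * c e * f (set L) / B \<ge> 0" using fnn[OF assms(1)] apos ce Bpos by simp
  then show "marg f e (set L) \<ge> 0" using 1 by linarith
qed

lemma grd_mono: "set L \<subseteq> V \<Longrightarrow> set xs \<subseteq> V \<Longrightarrow> f (set L) \<le> f (set (grd f c B \<alpha> L xs))"
proof (induction xs arbitrary: L)
  case Nil then show ?case by simp
next
  case (Cons x xs)
  show ?case
  proof (cases "passes f c B \<alpha> L x")
    case True
    have "f (set L) \<le> f (set (L @ [x]))"
      using pass_nonneg(2)[of L x] True Cons.prems by (simp add: marg_def)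
    also have "\<dots> \<le> f (set (grd f c B \<alpha> (L @ [x]) xs))"
      using Cons.IH[of "L @ [x]"] Cons.prems by auto
    finally show ?thesis using True by simp
  next
    case False then show ?thesis using Cons by auto
  qed
qed

definition good :: "'a list \<Rightarrow> bool" where
  "good L \<longleftrightarrow> (\<forall>i<length L. passes f c B \<alpha> (take i L) (L ! i))"

lemma good_Nil[simp]: "good []" by (simp add: good_def)

lemma good_snoc: "good (L @ [x]) \<longleftrightarrow> good L \<and> passes f c B \<alpha> L x"
  unfolding good_def
  by (auto simp: nth_append less_Suc_eq)

lemma grd_good: "good L \<Longrightarrow> good (grd f c B \<alpha> L xs)"
  by (induction xs arbitrary: L) (auto simp: good_snoc)

lemma cost_insert: "x \<notin> X \<Longrightarrow> finite X \<Longrightarrow> cost c (insert x X) = c x + cost c X"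
  by (simp add: cost_def)

lemma suffix_gain:
  assumes "good L" "set L \<subseteq> V" "distinct L" "k \<le> length L"
  shows "\<alpha> * cost c (set (drop k L)) * f (set (take k L)) / B \<le> f (set L) - f (set (take k L))"
  using assms
proof (induction L arbitrary: k rule: rev_induct)
  case Nil then show ?case by (simp add: cost_def)
next
  case (snoc x L)
  show ?case
  proof (cases "k = Suc (length L)")
    case True then show ?thesis by (simp add: cost_def)
  next
    case False
    then have k: "k \<le> length L" using snoc.prems by auto
    have gL: "good L" and px: "passes f c B \<alpha> L x" using snoc.prems good_snoc by auto
    have xV: "x \<in> V" and LV: "set L \<subseteq> V" and xL: "x \<notin> set L" using snoc.prems by auto
    have IH: "\<alpha> * cost c (set (drop k L)) * f (set (take k L)) / B \<le> f (set L) - f (set (take k L))"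
      using snoc.IH[OF gL LV _ k] snoc.prems by auto
    have tk: "set (take k L) \<subseteq> V" using LV set_take_subset by fastforce
    have ft: "f (set (take k L)) \<ge> 0" using fnn[OF tk] .
    have cd: "cost c (set (drop k L)) \<ge> 0" unfolding cost_def
      using LV set_drop_subset[of k L] cpos by (intro sum_nonneg) (fastforce intro: less_imp_le)
    have "\<alpha> * cost c (set (drop k L)) * f (set (take k L)) / B \<ge> 0"
      using apos cd ft Bpos by simp
    then have mono: "f (set (take k L)) \<le> f (set L)" using IH by linarith
    have g: "\<alpha> * c x * f (set L) / B \<le> marg f x (set L)" using pass_nonneg(1)[OF LV xV px] .
    have "\<alpha> * c x * f (set (take k L)) / B \<le> \<alpha> * c x * f (set L) / B"
      using mono apos cpos[OF xV] Bpos by (simp add: divide_right_mono)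
    then have g2: "\<alpha> * c x * f (set (take k L)) / B \<le> f (set L \<union> {x}) - f (set L)"
      using g by (simp add: marg_def)
    have dr: "set (drop k (L @ [x])) = insert x (set (drop k L))" using k by auto
    have xd: "x \<notin> set (drop k L)" using xL set_drop_subset by fastforce
    have cst: "cost c (set (drop k (L @ [x]))) = c x + cost c (set (drop k L))"
      using dr xd cost_insert by simp
    have "\<alpha> * cost c (set (drop k (L @ [x]))) * f (set (take k (L @ [x]))) / B
        = \<alpha> * c x * f (set (take k L)) / B + \<alpha> * cost c (set (drop k L)) * f (set (take k L)) / B"
      using cst k by (simp add: algebra_simps add_divide_distrib)
    also have "\<dots> \<le> (f (set L \<union> {x}) - f (set L)) + (f (set L) - f (set (take k L)))"
      using g2 IH by linarith
    finally show ?thesis using k by simp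
  qed
qed

end

lemma argmax_fin:
  fixes g :: "'b \<Rightarrow> 'c::linorder"
  assumes "finite {x. P x}" "P k"
  shows "P (arg_max g P) \<and> (\<forall>y. P y \<longrightarrow> g y \<le> g (arg_max g P))"
proof -
  have ne: "g ` {x. P x} \<noteq> {}" using assms by auto
  have "Max (g ` {x. P x}) \<in> g ` {x. P x}" using Max_in[OF finite_imageI[OF assms(1)] ne] .
  then obtain x where x: "P x" "g x = Max (g ` {x. P x})" by auto
  have "\<forall>y. P y \<longrightarrow> g y \<le> g x" using x assms(1) by auto
  then have ex: "\<exists>x. is_arg_max g P x" using x by (auto simp: is_arg_max_linorder)
  show ?thesis unfolding arg_max_def
    by (rule someI2_ex[OF ex]) (auto simp: is_arg_max_linorder)
qed

context larL begin

lemma suffix_sel: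
  assumes gL: "good L" and dL: "distinct L" and LV: "set L \<subseteq> V"
    and half: "\<And>e. e \<in> set L \<Longrightarrow> c e \<le> B / 2"
  shows "f (set L) \<le> (1 + 2 / \<alpha>) * f (lar_suffix c B L)" "cost c (lar_suffix c B L) \<le> B"
    "lar_suffix c B L \<subseteq> set L"
proof -
  define n where "n = length L"
  define P where "P = (\<lambda>j. j \<le> length L \<and> cost c (last_added L j) \<le> B)"
  define js where "js = arg_max (\<lambda>j. cost c (last_added L j)) P"
  have fin: "finite {j. P j}" unfolding P_def by (rule finite_subset[of _ "{..length L}"]) auto
  have P0: "P 0" unfolding P_def last_added_def using Bpos by (simp add: cost_def)
  have am: "P js \<and> (\<forall>y. P y \<longrightarrow> cost c (last_added L y) \<le> cost c (last_added L js))"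
    unfolding js_def using argmax_fin[OF fin P0] .
  have sel: "lar_suffix c B L = last_added L js"
    unfolding lar_suffix_def js_def P_def by simp
  show "cost c (lar_suffix c B L) \<le> B" using am sel P_def by simp
  show "lar_suffix c B L \<subseteq> set L" unfolding sel last_added_def using set_drop_subset by fastforce
  have fL0: "f (set L) \<ge> 0" using fnn LV by auto
  show "f (set L) \<le> (1 + 2 / \<alpha>) * f (lar_suffix c B L)"
  proof (cases "js = n")
    case True
    then have "lar_suffix c B L = set L" unfolding sel last_added_def n_def by simp
    then show ?thesis using fL0 apos by (simp add: algebra_simps)
  next
    case False
    then have jl: "js < n" using am P_def n_def by auto
    define m where "m = n - js"
    define k where "k = m - 1"
    have mk: "m = Suc k" "k < n" using jl unfolding m_def k_def by auto
    have dk: "drop k L = L ! k # drop m L" using mk n_def by (simp add: Cons_nth_drop_Suc)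
    have Sdef: "lar_suffix c B L = set (drop m L)" unfolding sel last_added_def m_def n_def by simp
    have lk: "last_added L (Suc js) = set (drop k L)"
      unfolding last_added_def k_def m_def n_def using jl n_def by (simp add: Suc_diff_Suc)
    have notin: "L ! k \<notin> set (drop m L)" using dL dk
      by (metis distinct.simps(2) distinct_drop)
    have Lk: "L ! k \<in> set L" using mk n_def by simp
    have ck: "c (L ! k) > 0" "c (L ! k) \<le> B / 2" using cpos half Lk LV by auto
    have costk: "cost c (set (drop k L)) = c (L ! k) + cost c (set (drop m L))"
      using dk notin by (simp add: cost_def)
    have "\<not> P (Suc js)"
    proof
      assume "P (Suc js)"
      then have "cost c (last_added L (Suc js)) \<le> cost c (last_added L js)" using am by auto
      then show False using lk costk ck sel Sdef by simp
    qed
    then have "cost c (set (drop k L)) > B" using lk jl unfolding P_def n_def by auto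
    then have cS: "cost c (set (drop m L)) > B / 2" using costk ck by simp
    have mle: "m \<le> length L" unfolding m_def n_def by simp
    have tV: "set (take m L) \<subseteq> V" "set (drop m L) \<subseteq> V"
      using LV set_take_subset set_drop_subset by fastforce+
    have fP: "f (set (take m L)) \<ge> 0" using fnn tV by auto
    have gain: "\<alpha> * cost c (set (drop m L)) * f (set (take m L)) / B \<le> f (set L) - f (set (take m L))"
      using suffix_gain[OF gL LV dL mle] .
    have "\<alpha> * (B / 2) * f (set (take m L)) / B \<le> \<alpha> * cost c (set (drop m L)) * f (set (take m L)) / B"
      using cS apos fP Bpos by (intro divide_right_mono mult_right_mono mult_left_mono) auto
    also have "\<alpha> * (B / 2) * f (set (take m L)) / B = \<alpha> / 2 * f (set (take m L))" using Bpos by simp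
    finally have g2: "\<alpha> / 2 * f (set (take m L)) \<le> f (set L) - f (set (take m L))" using gain by linarith
    have un: "set L = set (take m L) \<union> set (drop m L)"
      by (metis append_take_drop_id set_append)
    have sa: "f (set L) \<le> f (set (take m L)) + f (set (drop m L))" using subadd[OF tV] un by simp
    have fPb: "f (set (take m L)) \<le> 2 / \<alpha> * f (set (drop m L))"
    proof -
      have "\<alpha> / 2 * f (set (take m L)) \<le> f (set (drop m L))" using g2 sa by linarith
      then have "\<alpha> * f (set (take m L)) \<le> 2 * f (set (drop m L))" by simp
      then show ?thesis using apos by (simp add: field_simps)
    qed
    show ?thesis using sa fPb Sdef by (simp add: algebra_simps)
  qed
qed

end

lemma ord_split: assumes "u \<in> set ord" shows "\<exists>rest. ord = takeWhile (\<lambda>x. x \<noteq> u) ord @ u # rest"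
proof -
  have ne: "dropWhile (\<lambda>x. x \<noteq> u) ord \<noteq> []" using assms by simp
  then have "hd (dropWhile (\<lambda>x. x \<noteq> u) ord) = u" using hd_dropWhile[OF ne] by simp
  then have "dropWhile (\<lambda>x. x \<noteq> u) ord = u # tl (dropWhile (\<lambda>x. x \<noteq> u) ord)"
    using ne by (metis list.collapse)
  then show ?thesis by (metis takeWhile_dropWhile_id)
qed

context larL begin

definition Tsg :: "'a set \<Rightarrow> 'a list \<Rightarrow> 'a list \<Rightarrow> 'a \<Rightarrow> 'a list" where
  "Tsg Vp L0 zs u = grd f c B \<alpha> L0 (filter (\<lambda>e. e \<in> Vp) (takeWhile (\<lambda>x. x \<noteq> u) zs))"

lemma sum_gains:
  assumes "set L0 \<subseteq> V" "set zs \<subseteq> V" "distinct zs"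
  shows "(\<Sum>u\<in>X \<inter> set zs. if u \<in> Vp \<and> passes f c B \<alpha> (Tsg Vp L0 zs u) u
            then marg f u (set (Tsg Vp L0 zs u)) else 0)
         \<le> f (set (grd f c B \<alpha> L0 (filter (\<lambda>e. e \<in> Vp) zs))) - f (set L0)"
  using assms
proof (induction zs arbitrary: L0)
  case Nil then show ?case by simp
next
  case (Cons z zs)
  define L1 where "L1 = (if z \<in> Vp \<and> passes f c B \<alpha> L0 z then L0 @ [z] else L0)"
  have zV: "z \<in> V" and zsV: "set zs \<subseteq> V" and zz: "z \<notin> set zs" and dz: "distinct zs"
    using Cons.prems by auto
  have L1V: "set L1 \<subseteq> V" using Cons.prems unfolding L1_def by auto
  have IH: "(\<Sum>u\<in>X \<inter> set zs. if u \<in> Vp \<and> passes f c B \<alpha> (Tsg Vp L1 zs u) u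
            then marg f u (set (Tsg Vp L1 zs u)) else 0)
         \<le> f (set (grd f c B \<alpha> L1 (filter (\<lambda>e. e \<in> Vp) zs))) - f (set L1)"
    using Cons.IH[OF L1V zsV dz] .
  have Teq: "Tsg Vp L0 (z # zs) u = Tsg Vp L1 zs u" if "u \<in> set zs" for u
    using that zz unfolding Tsg_def L1_def by auto
  have T0: "Tsg Vp L0 (z # zs) z = L0" unfolding Tsg_def by simp
  have fin: "grd f c B \<alpha> L0 (filter (\<lambda>e. e \<in> Vp) (z # zs)) = grd f c B \<alpha> L1 (filter (\<lambda>e. e \<in> Vp) zs)"
    unfolding L1_def by auto
  define tz where "tz = (if z \<in> Vp \<and> passes f c B \<alpha> L0 z then marg f z (set L0) else 0)"
  have tz: "tz = f (set L1) - f (set L0)" unfolding tz_def L1_def by (auto simp: marg_def)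
  have tz0: "tz \<ge> 0" unfolding tz_def using pass_nonneg(2)[of L0 z] Cons.prems zV by auto
  let ?F = "\<lambda>u. if u \<in> Vp \<and> passes f c B \<alpha> (Tsg Vp L0 (z # zs) u) u
            then marg f u (set (Tsg Vp L0 (z # zs) u)) else 0"
  have s1: "(\<Sum>u\<in>X \<inter> set zs. ?F u) = (\<Sum>u\<in>X \<inter> set zs. if u \<in> Vp \<and> passes f c B \<alpha> (Tsg Vp L1 zs u) u
            then marg f u (set (Tsg Vp L1 zs u)) else 0)"
    by (rule sum.cong) (auto simp: Teq)
  have Fz: "?F z = tz" unfolding tz_def T0 by simp
  have "(\<Sum>u\<in>X \<inter> set (z # zs). ?F u) \<le> tz + (\<Sum>u\<in>X \<inter> set zs. ?F u)"
  proof (cases "z \<in> X")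
    case True
    have "X \<inter> set (z # zs) = insert z (X \<inter> set zs)" using True by auto
    then show ?thesis using zz Fz by simp
  next
    case False
    have "X \<inter> set (z # zs) = X \<inter> set zs" using False by auto
    then show ?thesis using tz0 by simp
  qed
  then show ?case using s1 IH tz fin by simp
qed

end

locale larO = larL +
  fixes ord :: "'a list"
  assumes dist: "distinct ord" and setord: "set ord = V"
begin

definition Lf :: "'a set \<Rightarrow> 'a list" where
  "Lf Vp = grd f c B \<alpha> [] (filter (\<lambda>e. e \<in> Vp) ord)"

definition Ts :: "'a set \<Rightarrow> 'a \<Rightarrow> 'a list" where
  "Ts Vp u = Tsg Vp [] ord u"

definition G :: "'a set \<Rightarrow> 'a \<Rightarrow> real" where
  "G Vp u = (if passes f c B \<alpha> (Ts Vp u) u then marg f u (set (Ts Vp u)) else 0)"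

lemma Lf_V: "set (Lf Vp) \<subseteq> V"
  unfolding Lf_def using grd_set[of f c B \<alpha> "[]" "filter (\<lambda>e. e \<in> Vp) ord"] setord by auto

lemma Lf_Vp: "set (Lf Vp) \<subseteq> Vp"
  unfolding Lf_def using grd_set[of f c B \<alpha> "[]" "filter (\<lambda>e. e \<in> Vp) ord"] by auto

lemma Lf_dist: "distinct (Lf Vp)"
  unfolding Lf_def using dist by (intro grd_distinct) auto

lemma Lf_good: "good (Lf Vp)"
  unfolding Lf_def by (rule grd_good) simp

lemma Ts_V: "set (Ts Vp u) \<subseteq> V"
proof -
  have "set (filter (\<lambda>e. e \<in> Vp) (takeWhile (\<lambda>x. x \<noteq> u) ord)) \<subseteq> set ord"
    by (auto dest: set_takeWhileD)
  then show ?thesis unfolding Ts_def Tsg_def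
    using grd_set[of f c B \<alpha> "[]" "filter (\<lambda>e. e \<in> Vp) (takeWhile (\<lambda>x. x \<noteq> u) ord)"] setord
    by auto
qed

lemma Lf_split: assumes "u \<in> V"
  shows "Lf Vp = grd f c B \<alpha> (Ts Vp u) (filter (\<lambda>e. e \<in> Vp) (u # drop (Suc (length (takeWhile (\<lambda>x. x \<noteq> u) ord))) ord))"
proof -
  define tw where "tw = takeWhile (\<lambda>x. x \<noteq> u) ord"
  have uo: "u \<in> set ord" using assms setord by simp
  obtain rest where r: "ord = tw @ u # rest" using ord_split[OF uo] unfolding tw_def by blast
  have rs: "drop (Suc (length tw)) ord = rest" by (subst r) simp
  have "Lf Vp = grd f c B \<alpha> [] (filter (\<lambda>e. e \<in> Vp) (tw @ u # rest))"
    unfolding Lf_def by (subst r) (rule refl)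
  also have "\<dots> = grd f c B \<alpha> (Ts Vp u) (filter (\<lambda>e. e \<in> Vp) (u # rest))"
    unfolding Ts_def Tsg_def tw_def[symmetric] by (simp only: filter_append grd_append)
  finally show ?thesis using rs unfolding tw_def by simp
qed

lemma G_nonneg: "u \<in> V \<Longrightarrow> G Vp u \<ge> 0"
  unfolding G_def using pass_nonneg(2)[OF Ts_V] by auto

lemma pointwise1:
  assumes oV: "u \<in> V"
  shows "marg f u (set (Lf Vp)) \<le> \<alpha> * c u * f (set (Lf Vp)) / B + (if u \<notin> Vp then G Vp u else 0)"
proof -
  define S where "S = set (Lf Vp)"
  define T where "T = Ts Vp u"
  define rest where "rest = drop (Suc (length (takeWhile (\<lambda>x. x \<noteq> u) ord))) ord"
  have Lsp: "Lf Vp = grd f c B \<alpha> T (filter (\<lambda>e. e \<in> Vp) (u # rest))"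
    unfolding T_def rest_def using Lf_split[OF oV] .
  have SV: "S \<subseteq> V" unfolding S_def using Lf_V .
  have TV: "set T \<subseteq> V" unfolding T_def using Ts_V .
  have restV: "set rest \<subseteq> V" unfolding rest_def using setord set_drop_subset by fastforce
  have TS: "set T \<subseteq> S" unfolding S_def Lsp using grd_set2 by fastforce
  have fTS: "f (set T) \<le> f S" unfolding S_def Lsp by (rule grd_mono[OF TV]) (use restV oV in auto)
  have fS: "f S \<ge> 0" using fnn SV by auto
  have co: "c u > 0" using cpos oV by auto
  have R0: "\<alpha> * c u * f S / B \<ge> 0" using apos co fS Bpos by simp
  have G0: "G Vp u \<ge> 0" using G_nonneg oV by auto
  show ?thesis
  proof (cases "u \<in> S")
    case True
    then have "marg f u S = 0" by (simp add: marg_def insert_absorb)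
    then show ?thesis using R0 G0 unfolding S_def by simp
  next
    case False
    then have oT: "u \<notin> set T" using TS by auto
    have md: "marg f u S \<le> marg f u (set T)" using dimret[OF TS SV oV False] .
    show ?thesis
    proof (cases "passes f c B \<alpha> T u")
      case True
      have "u \<notin> Vp"
      proof
        assume "u \<in> Vp"
        then have "Lf Vp = grd f c B \<alpha> (T @ [u]) (filter (\<lambda>e. e \<in> Vp) rest)"
          using Lsp True by simp
        then have "u \<in> S" unfolding S_def using grd_set2 by fastforce
        then show False using False by simp
      qed
      then show ?thesis using md R0 True unfolding G_def T_def[symmetric] S_def by simp
    next
      case nP: False
      have "marg f u (set T) / c u < \<alpha> * f (set T) / B" using nP by (simp add: passes_def)
      then have "marg f u (set T) < \<alpha> * f (set T) / B * c u" using co by (simp add: divide_less_eq)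
      also have "\<dots> \<le> \<alpha> * f S / B * c u"
        using fTS apos Bpos co by (intro mult_right_mono divide_right_mono mult_left_mono) auto
      finally have "marg f u S < \<alpha> * c u * f S / B" using md by (simp add: algebra_simps)
      then show ?thesis using G0 unfolding S_def by simp
    qed
  qed
qed

lemma P1:
  assumes XV: "X \<subseteq> V"
  shows "f (set (Lf Vp) \<union> X) \<le> f (set (Lf Vp)) + \<alpha> * cost c X * f (set (Lf Vp)) / B
           + (\<Sum>u\<in>X. if u \<notin> Vp then G Vp u else 0)"
proof -
  have finX: "finite X" using XV finV finite_subset by auto
  have "f (set (Lf Vp) \<union> X) \<le> f (set (Lf Vp)) + (\<Sum>u\<in>X. marg f u (set (Lf Vp)))"
    using union_bound[OF finX XV Lf_V] .
  also have "(\<Sum>u\<in>X. marg f u (set (Lf Vp))) \<le>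
       (\<Sum>u\<in>X. \<alpha> * c u * f (set (Lf Vp)) / B + (if u \<notin> Vp then G Vp u else 0))"
    by (intro sum_mono pointwise1) (use XV in auto)
  also have "\<dots> = \<alpha> * cost c X * f (set (Lf Vp)) / B + (\<Sum>u\<in>X. if u \<notin> Vp then G Vp u else 0)"
    by (simp add: sum.distrib cost_def sum_divide_distrib sum_distrib_left sum_distrib_right algebra_simps)
  finally show ?thesis by simp
qed

lemma P2:
  assumes XV: "X \<subseteq> V"
  shows "(\<Sum>u\<in>X. if u \<in> Vp then G Vp u else 0) \<le> f (set (Lf Vp))"
proof -
  have "X \<inter> set ord = X" using XV setord by auto
  then have "(\<Sum>u\<in>X. if u \<in> Vp then G Vp u else 0) =
    (\<Sum>u\<in>X \<inter> set ord. if u \<in> Vp \<and> passes f c B \<alpha> (Tsg Vp [] ord u) u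
            then marg f u (set (Tsg Vp [] ord u)) else 0)"
    unfolding G_def Ts_def by (intro sum.cong) auto
  also have "\<dots> \<le> f (set (grd f c B \<alpha> [] (filter (\<lambda>e. e \<in> Vp) ord))) - f (set [])"
    by (rule sum_gains) (use setord dist in auto)
  also have "\<dots> = f (set (Lf Vp))" by (simp only: Lf_def list.set f_empty diff_zero)
  finally show ?thesis .
qed

end

lemma finite_Pi_bern: "finite A \<Longrightarrow> finite (set_pmf (Pi_pmf A False (\<lambda>_. bernoulli_pmf p)))"
  by (subst set_Pi_pmf) (auto intro!: finite_PiE_dflt)

lemma indep_pi:
  fixes G :: "('a \<Rightarrow> bool) \<Rightarrow> real"
  assumes fin: "finite A" and xA: "x \<in> A" and p: "0 \<le> p" "p \<le> 1"
    and Gx: "\<And>b t. G (b(x := t)) = G b"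
  shows "measure_pmf.expectation (Pi_pmf A False (\<lambda>_. bernoulli_pmf p)) (\<lambda>b. if b x then G b else 0)
       = p * measure_pmf.expectation (Pi_pmf A False (\<lambda>_. bernoulli_pmf p)) G"
proof -
  define Q where "Q = Pi_pmf (A - {x}) False (\<lambda>_. bernoulli_pmf p)"
  define R where "R = pair_pmf (bernoulli_pmf p) Q"
  have Aeq: "A = insert x (A - {x})" using xA by auto
  have om: "Pi_pmf A False (\<lambda>_. bernoulli_pmf p) = map_pmf (\<lambda>(y, g). g(x := y)) R"
    unfolding R_def Q_def by (subst Aeq) (rule Pi_pmf_insert, use fin in auto)
  have Gs: "\<And>z. G ((\<lambda>(y, g). g(x := y)) z) = G (snd z)"
    by (simp add: case_prod_unfold) (rule Gx)
  have finQ: "finite (set_pmf Q)" unfolding Q_def using fin by (intro finite_Pi_bern) auto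
  have e1: "measure_pmf.expectation (Pi_pmf A False (\<lambda>_. bernoulli_pmf p)) G = measure_pmf.expectation Q G"
  proof -
    have "measure_pmf.expectation (Pi_pmf A False (\<lambda>_. bernoulli_pmf p)) G
        = measure_pmf.expectation R (\<lambda>z. G (snd z))"
      unfolding om integral_map_pmf Gs by (rule refl)
    also have "\<dots> = measure_pmf.expectation Q G" unfolding R_def by simp
    finally show ?thesis .
  qed
  have e2: "measure_pmf.expectation (Pi_pmf A False (\<lambda>_. bernoulli_pmf p)) (\<lambda>b. if b x then G b else 0)
        = measure_pmf.expectation R (\<lambda>z. if fst z then G (snd z) else 0)"
    unfolding om integral_map_pmf by (rule Bochner_Integration.integral_cong[OF refl]) (auto simp: case_prod_unfold Gx[of "snd _"] Gs[unfolded case_prod_unfold])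
  have finR: "finite (UNIV \<times> set_pmf Q :: (bool \<times> ('a \<Rightarrow> bool)) set)" using finQ by simp
  have "measure_pmf.expectation R (\<lambda>z. if fst z then G (snd z) else 0)
      = (\<Sum>z\<in>UNIV \<times> set_pmf Q. (if fst z then G (snd z) else 0) * pmf R z)"
    by (rule integral_measure_pmf_real[OF finR]) (auto simp: R_def)
  also have "\<dots> = (\<Sum>y\<in>UNIV. \<Sum>g\<in>set_pmf Q. (if y then G g else 0) * (pmf (bernoulli_pmf p) y * pmf Q g))"
    by (simp add: sum.cartesian_product R_def case_prod_unfold) (rule sum.cong[OF refl], metis pmf_pair prod.collapse)
  also have "\<dots> = (\<Sum>g\<in>set_pmf Q. G g * (p * pmf Q g))"
    using p by (simp add: UNIV_bool)
  also have "\<dots> = p * (\<Sum>g\<in>set_pmf Q. G g * pmf Q g)"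
    by (simp add: sum_distrib_left algebra_simps)
  also have "(\<Sum>g\<in>set_pmf Q. G g * pmf Q g) = measure_pmf.expectation Q G"
    by (rule integral_measure_pmf_real[symmetric, OF finQ]) auto
  finally show ?thesis using e1 e2 by simp
qed

lemma prob_component:
  assumes fin: "finite A" and p: "0 \<le> p" "p \<le> 1"
  shows "measure_pmf.prob (Pi_pmf A False (\<lambda>_. bernoulli_pmf p)) {b. b x} \<le> p"
proof -
  have "measure_pmf.prob (Pi_pmf A False (\<lambda>_. bernoulli_pmf p)) {b. b x}
     = measure_pmf.prob (map_pmf (\<lambda>b. b x) (Pi_pmf A False (\<lambda>_. bernoulli_pmf p))) {True}"
    by (simp add: measure_map_pmf vimage_def)
  also have "\<dots> = (if x \<in> A then p else 0)"
    using fin p by (simp add: Pi_pmf_component measure_pmf_single)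
  finally show ?thesis using p by simp
qed

lemma exp_indicator_const:
  fixes D :: "'b pmf" and k :: real
  shows "measure_pmf.expectation D (\<lambda>Z. if P Z then k else 0) = k * measure_pmf.prob D {Z. P Z}"
proof -
  have "(\<lambda>Z. if P Z then k else 0) = (\<lambda>Z. k * indicator {Z. P Z} Z)" by (auto simp: indicator_def)
  then show ?thesis by simp
qed

lemma bfns:
  fixes g :: "'a set \<Rightarrow> real" and U :: "'a set"
  assumes finU: "finite U" and gnn: "\<And>A. A \<subseteq> U \<Longrightarrow> g A \<ge> 0"
    and gsm: "\<And>X Y. X \<subseteq> U \<Longrightarrow> Y \<subseteq> U \<Longrightarrow> g (X \<union> Y) + g (X \<inter> Y) \<le> g X + g Y"
  shows "\<forall>(D::'a set pmf) m. finite (set_pmf D) \<longrightarrow> (\<forall>A\<in>set_pmf D. A \<subseteq> U) \<longrightarrow> 0 \<le> m \<longrightarrow> m \<le> M \<longrightarrow>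
     (\<forall>u\<in>U. m \<le> measure_pmf.prob D {A. u \<in> A} \<and> measure_pmf.prob D {A. u \<in> A} \<le> M) \<longrightarrow>
     (1 - M) * g {} + m * g U \<le> measure_pmf.expectation D g"
  using finU gnn gsm
proof (induction U rule: finite_remove_induct)
  case empty
  show ?case
  proof (intro allI impI)
    fix D :: "'a set pmf" and m :: real
    assume "\<forall>A\<in>set_pmf D. A \<subseteq> {}" "0 \<le> m" "m \<le> M"
    then have "set_pmf D \<subseteq> {{}}" by auto
    then have "D = return_pmf {}" by (simp add: set_pmf_subset_singleton)
    moreover have "g {} \<ge> 0" using empty by auto
    ultimately show "(1 - M) * g {} + m * g {} \<le> measure_pmf.expectation D g"
      using \<open>m \<le> M\<close> by (simp add: algebra_simps mult_right_mono)
  qed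
next
  case (remove A)
  show ?case
  proof (intro allI impI)
    fix D :: "'a set pmf" and m :: real
    assume finD: "finite (set_pmf D)" and DA: "\<forall>Z\<in>set_pmf D. Z \<subseteq> A" and m0: "0 \<le> m" and mM: "m \<le> M"
      and marg: "\<forall>u\<in>A. m \<le> measure_pmf.prob D {Z. u \<in> Z} \<and> measure_pmf.prob D {Z. u \<in> Z} \<le> M"
    define q where "q = (\<lambda>u. measure_pmf.prob D {Z. u \<in> Z})"
    have "Min (q ` A) \<in> q ` A" using remove.hyps by (intro Min_in) auto
    then obtain u where uA: "u \<in> A" and qu: "q u = Min (q ` A)" by auto
    have qmin: "\<And>v. v \<in> A \<Longrightarrow> q u \<le> q v" using qu remove.hyps by simp
    define D' where "D' = map_pmf (\<lambda>Z. Z - {u}) D"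
    have finD': "finite (set_pmf D')" unfolding D'_def using finD by simp
    have D'A: "\<forall>Z\<in>set_pmf D'. Z \<subseteq> A - {u}" unfolding D'_def using DA by auto
    have q0: "0 \<le> q u" unfolding q_def by simp
    have qM: "q u \<le> M" using marg uA q_def by auto
    have mq: "m \<le> q u" using marg uA q_def by auto
    have margD': "\<forall>v\<in>A - {u}. q u \<le> measure_pmf.prob D' {Z. v \<in> Z} \<and> measure_pmf.prob D' {Z. v \<in> Z} \<le> M"
    proof
      fix v assume v: "v \<in> A - {u}"
      have "measure_pmf.prob D' {Z. v \<in> Z} = q v"
        unfolding D'_def q_def using v by (simp add: measure_map_pmf vimage_def)
      then show "q u \<le> measure_pmf.prob D' {Z. v \<in> Z} \<and> measure_pmf.prob D' {Z. v \<in> Z} \<le> M"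
        using qmin[of v] v marg q_def by auto
    qed
    have gnn': "\<And>Z. Z \<subseteq> A - {u} \<Longrightarrow> g Z \<ge> 0" using remove.prems(1) by blast
    have gsm': "\<And>X Y. X \<subseteq> A - {u} \<Longrightarrow> Y \<subseteq> A - {u} \<Longrightarrow> g (X \<union> Y) + g (X \<inter> Y) \<le> g X + g Y"
      using remove.prems(2) by blast
    have IH: "(1 - M) * g {} + q u * g (A - {u}) \<le> measure_pmf.expectation D' g"
      using remove.IH[OF uA gnn' gsm'] finD' D'A q0 qM margD' by blast
    have E': "measure_pmf.expectation D' g = measure_pmf.expectation D (\<lambda>Z. g (Z - {u}))"
      unfolding D'_def by simp
    have pw: "g (Z - {u}) + (if u \<in> Z then g A - g (A - {u}) else 0) \<le> g Z" if Z: "Z \<in> set_pmf D" for Z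
    proof (cases "u \<in> Z")
      case True
      have ZA: "Z \<subseteq> A" using DA Z by auto
      have 1: "Z \<union> (A - {u}) = A" using ZA True uA by auto
      have 2: "Z \<inter> (A - {u}) = Z - {u}" using ZA by auto
      have "g (Z \<union> (A - {u})) + g (Z \<inter> (A - {u})) \<le> g Z + g (A - {u})"
        using remove.prems(2)[of Z "A - {u}"] ZA remove.hyps by auto
      then show ?thesis using 1 2 True by simp
    qed simp
    have int: "\<And>h :: 'a set \<Rightarrow> real. integrable (measure_pmf D) h"
      using finD by (rule integrable_measure_pmf_finite)
    have "measure_pmf.expectation D (\<lambda>Z. g (Z - {u}) + (if u \<in> Z then g A - g (A - {u}) else 0))
          \<le> measure_pmf.expectation D g"
      by (rule integral_mono_AE) (simp_all only: int AE_measure_pmf_iff pw, simp add: pw)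
    moreover have "measure_pmf.expectation D (\<lambda>Z. g (Z - {u}) + (if u \<in> Z then g A - g (A - {u}) else 0))
       = measure_pmf.expectation D (\<lambda>Z. g (Z - {u})) + (g A - g (A - {u})) * q u"
      by (subst Bochner_Integration.integral_add) (auto simp: int exp_indicator_const q_def)
    ultimately have "(1 - M) * g {} + q u * g A \<le> measure_pmf.expectation D g"
      using IH E' by (simp add: algebra_simps)
    moreover have "m * g A \<le> q u * g A"
      using mq remove.prems(1)[of A] by (intro mult_right_mono) auto
    ultimately show "(1 - M) * g {} + m * g A \<le> measure_pmf.expectation D g" by linarith
  qed
qed

locale larP = larO +
  fixes p :: real
  assumes p0: "0 < p" and p1: "p < 1"
begin

definition V1 where "V1 = V_half V c B"
definition \<Omega> where "\<Omega> = Pi_pmf V1 False (\<lambda>_. bernoulli_pmf p)"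
definition Vpb where "Vpb b = {e \<in> V1. b e}"
definition Sb where "Sb b = set (Lf (Vpb b))"

lemma V1V: "V1 \<subseteq> V" unfolding V1_def V_half_def by auto
lemma finV1: "finite V1" using V1V finV finite_subset by auto
lemma fin\<Omega>: "finite (set_pmf \<Omega>)" unfolding \<Omega>_def using finV1 by (rule finite_Pi_bern)
lemma int\<Omega>: "integrable (measure_pmf \<Omega>) (h :: ('a \<Rightarrow> bool) \<Rightarrow> real)"
  using fin\<Omega> by (rule integrable_measure_pmf_finite)

lemma Ts_cong: assumes "\<And>e. e \<noteq> u \<Longrightarrow> e \<in> Vp \<longleftrightarrow> e \<in> Vp'"
  shows "Ts Vp u = Ts Vp' u"
proof -
  have "filter (\<lambda>e. e \<in> Vp) (takeWhile (\<lambda>x. x \<noteq> u) ord) = filter (\<lambda>e. e \<in> Vp') (takeWhile (\<lambda>x. x \<noteq> u) ord)"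
    using assms by (intro filter_cong refl) (auto dest: set_takeWhileD)
  then show ?thesis unfolding Ts_def Tsg_def by simp
qed

lemma G_cong: "G (Vpb (b(u := t))) u = G (Vpb b) u"
proof -
  have "Ts (Vpb (b(u := t))) u = Ts (Vpb b) u" by (rule Ts_cong) (auto simp: Vpb_def)
  then show ?thesis unfolding G_def by simp
qed

lemma exp_pos: "u \<in> V1 \<Longrightarrow> measure_pmf.expectation \<Omega> (\<lambda>b. if b u then G (Vpb b) u else 0)
   = p * measure_pmf.expectation \<Omega> (\<lambda>b. G (Vpb b) u)"
  unfolding \<Omega>_def using p0 p1 finV1 by (intro indep_pi) (auto simp: G_cong)

lemma exp_neg: assumes "u \<in> V1"
  shows "measure_pmf.expectation \<Omega> (\<lambda>b. if \<not> b u then G (Vpb b) u else 0)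
   = (1 - p) * measure_pmf.expectation \<Omega> (\<lambda>b. G (Vpb b) u)"
proof -
  have "(\<lambda>b. if \<not> b u then G (Vpb b) u else 0) = (\<lambda>b. G (Vpb b) u - (if b u then G (Vpb b) u else 0))"
    by auto
  then have "measure_pmf.expectation \<Omega> (\<lambda>b. if \<not> b u then G (Vpb b) u else 0)
     = measure_pmf.expectation \<Omega> (\<lambda>b. G (Vpb b) u) - measure_pmf.expectation \<Omega> (\<lambda>b. if b u then G (Vpb b) u else 0)"
    by (simp add: Bochner_Integration.integral_diff[OF int\<Omega> int\<Omega>])
  then show ?thesis using exp_pos[OF assms] by (simp add: algebra_simps)
qed

lemma missed_bound:
  assumes O1: "O1 \<subseteq> V1"
  shows "measure_pmf.expectation \<Omega> (\<lambda>b. \<Sum>u\<in>O1. if u \<notin> Vpb b then G (Vpb b) u else 0)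
     \<le> (1 - p) / p * measure_pmf.expectation \<Omega> (\<lambda>b. f (Sb b))"
proof -
  have fin: "finite O1" using O1 finV1 finite_subset by auto
  have O1V: "O1 \<subseteq> V" using O1 V1V by auto
  have eq1: "\<And>b. (\<Sum>u\<in>O1. if u \<notin> Vpb b then G (Vpb b) u else 0) = (\<Sum>u\<in>O1. if \<not> b u then G (Vpb b) u else 0)"
    using O1 by (intro sum.cong) (auto simp: Vpb_def)
  have eq2: "\<And>b. (\<Sum>u\<in>O1. if u \<in> Vpb b then G (Vpb b) u else 0) = (\<Sum>u\<in>O1. if b u then G (Vpb b) u else 0)"
    using O1 by (intro sum.cong) (auto simp: Vpb_def)
  define EG where "EG u = measure_pmf.expectation \<Omega> (\<lambda>b. G (Vpb b) u)" for u
  have "measure_pmf.expectation \<Omega> (\<lambda>b. \<Sum>u\<in>O1. if u \<notin> Vpb b then G (Vpb b) u else 0)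
      = (\<Sum>u\<in>O1. measure_pmf.expectation \<Omega> (\<lambda>b. if \<not> b u then G (Vpb b) u else 0))"
    unfolding eq1 by (rule Bochner_Integration.integral_sum) (rule int\<Omega>)
  also have "\<dots> = (\<Sum>u\<in>O1. (1 - p) * EG u)"
    unfolding EG_def using O1 by (intro sum.cong refl exp_neg) auto
  finally have A: "measure_pmf.expectation \<Omega> (\<lambda>b. \<Sum>u\<in>O1. if u \<notin> Vpb b then G (Vpb b) u else 0)
      = (1 - p) * (\<Sum>u\<in>O1. EG u)" by (simp add: sum_distrib_left)
  have "p * (\<Sum>u\<in>O1. EG u) = (\<Sum>u\<in>O1. measure_pmf.expectation \<Omega> (\<lambda>b. if b u then G (Vpb b) u else 0))"
    unfolding EG_def sum_distrib_left using O1 by (intro sum.cong refl exp_pos[symmetric]) auto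
  also have "\<dots> = measure_pmf.expectation \<Omega> (\<lambda>b. \<Sum>u\<in>O1. if u \<in> Vpb b then G (Vpb b) u else 0)"
    unfolding eq2 by (rule Bochner_Integration.integral_sum[symmetric]) (rule int\<Omega>)
  also have "\<dots> \<le> measure_pmf.expectation \<Omega> (\<lambda>b. f (Sb b))"
    unfolding Sb_def by (rule integral_mono[OF int\<Omega> int\<Omega>]) (rule P2[OF O1V])
  finally have B: "p * (\<Sum>u\<in>O1. EG u) \<le> measure_pmf.expectation \<Omega> (\<lambda>b. f (Sb b))" .
  have "(1 - p) * (\<Sum>u\<in>O1. EG u) = (1 - p) / p * (p * (\<Sum>u\<in>O1. EG u))" using p0 by simp
  also have "\<dots> \<le> (1 - p) / p * measure_pmf.expectation \<Omega> (\<lambda>b. f (Sb b))"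
    using B p0 p1 by (intro mult_left_mono) auto
  finally show ?thesis using A by simp
qed

lemma rand_lower:
  assumes O1: "O1 \<subseteq> V1"
  shows "(1 - p) * f O1 \<le> measure_pmf.expectation \<Omega> (\<lambda>b. f (Sb b \<union> O1))"
proof -
  have O1V: "O1 \<subseteq> V" using O1 V1V by auto
  define g where "g A = f (A \<union> O1)" for A
  have gnn: "\<And>A. A \<subseteq> V \<Longrightarrow> g A \<ge> 0" unfolding g_def using O1V fnn by auto
  have gsm: "\<And>X Y. X \<subseteq> V \<Longrightarrow> Y \<subseteq> V \<Longrightarrow> g (X \<union> Y) + g (X \<inter> Y) \<le> g X + g Y"
  proof -
    fix X Y assume XY: "X \<subseteq> V" "Y \<subseteq> V"
    have "(X \<union> O1) \<union> (Y \<union> O1) = X \<union> Y \<union> O1" "(X \<union> O1) \<inter> (Y \<union> O1) = X \<inter> Y \<union> O1" by auto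
    then show "g (X \<union> Y) + g (X \<inter> Y) \<le> g X + g Y"
      unfolding g_def using sm[of "X \<union> O1" "Y \<union> O1"] XY O1V by auto
  qed
  define D where "D = map_pmf Sb \<Omega>"
  have finD: "finite (set_pmf D)" unfolding D_def using fin\<Omega> by simp
  have DV: "\<forall>A\<in>set_pmf D. A \<subseteq> V" unfolding D_def Sb_def using Lf_V by auto
  have mar: "\<forall>u\<in>V. 0 \<le> measure_pmf.prob D {A. u \<in> A} \<and> measure_pmf.prob D {A. u \<in> A} \<le> p"
  proof
    fix u assume "u \<in> V"
    have "measure_pmf.prob D {A. u \<in> A} = measure_pmf.prob \<Omega> {b. u \<in> Sb b}"
      unfolding D_def by (simp add: measure_map_pmf vimage_def)
    also have "\<dots> \<le> measure_pmf.prob \<Omega> {b. b u}"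
      by (rule measure_pmf.finite_measure_mono) (use Lf_Vp in \<open>auto simp: Sb_def Vpb_def\<close>)
    also have "\<dots> \<le> p" unfolding \<Omega>_def using finV1 p0 p1 by (intro prob_component) auto
    finally show "0 \<le> measure_pmf.prob D {A. u \<in> A} \<and> measure_pmf.prob D {A. u \<in> A} \<le> p" by simp
  qed
  have "(1 - p) * g {} + 0 * g V \<le> measure_pmf.expectation D g"
    by (rule bfns[OF finV gnn gsm, of p, rule_format, of D 0]) (use finD DV mar p0 p1 in auto)
  then show ?thesis unfolding g_def D_def by simp
qed

lemma main_bound:
  assumes O1: "O1 \<subseteq> V1"
  shows "(1 - p) * f O1 \<le> (1 + \<alpha> * cost c O1 / B + (1 - p) / p) * measure_pmf.expectation \<Omega> (\<lambda>b. f (Sb b))"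
proof -
  have O1V: "O1 \<subseteq> V" using O1 V1V by auto
  have "measure_pmf.expectation \<Omega> (\<lambda>b. f (Sb b \<union> O1)) \<le> measure_pmf.expectation \<Omega>
     (\<lambda>b. f (Sb b) + \<alpha> * cost c O1 * f (Sb b) / B + (\<Sum>u\<in>O1. if u \<notin> Vpb b then G (Vpb b) u else 0))"
    unfolding Sb_def by (rule integral_mono[OF int\<Omega> int\<Omega>]) (rule P1[OF O1V])
  also have "\<dots> = (1 + \<alpha> * cost c O1 / B) * measure_pmf.expectation \<Omega> (\<lambda>b. f (Sb b))
      + measure_pmf.expectation \<Omega> (\<lambda>b. \<Sum>u\<in>O1. if u \<notin> Vpb b then G (Vpb b) u else 0)"
  proof -
    have "(\<lambda>b. f (Sb b) + \<alpha> * cost c O1 * f (Sb b) / B + (\<Sum>u\<in>O1. if u \<notin> Vpb b then G (Vpb b) u else 0))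
        = (\<lambda>b. (1 + \<alpha> * cost c O1 / B) * f (Sb b) + (\<Sum>u\<in>O1. if u \<notin> Vpb b then G (Vpb b) u else 0))"
      by (auto simp: algebra_simps)
    then show ?thesis
      by (simp add: Bochner_Integration.integral_add[OF int\<Omega> int\<Omega>])
  qed
  also have "\<dots> \<le> (1 + \<alpha> * cost c O1 / B) * measure_pmf.expectation \<Omega> (\<lambda>b. f (Sb b))
      + (1 - p) / p * measure_pmf.expectation \<Omega> (\<lambda>b. f (Sb b))"
    using missed_bound[OF O1] by simp
  finally show ?thesis using rand_lower[OF O1] by (simp add: algebra_simps)
qed

end

context larP begin

definition em where "em = e_max V f"

lemma em_prop: assumes "V \<noteq> {}" shows "em \<in> V" "\<And>e. e \<in> V \<Longrightarrow> f {e} \<le> f {em}"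
proof -
  obtain v where v: "v \<in> V" using assms by auto
  have "em \<in> V \<and> (\<forall>y. y \<in> V \<longrightarrow> f {y} \<le> f {em})"
    unfolding em_def e_max_def using argmax_fin[of "\<lambda>e. e \<in> V" v "\<lambda>e. f {e}"] finV v by simp
  then show "em \<in> V" "\<And>e. e \<in> V \<Longrightarrow> f {e} \<le> f {em}" by auto
qed

definition out where "out Vp = (if f {em} \<le> f (lar_suffix c B (Lf Vp)) then lar_suffix c B (Lf Vp) else {em})"

lemma lar_run_eq: "lar_run V f c B \<alpha> ord Vp = (out Vp, card V + 2 * length (filter (\<lambda>e. e \<in> Vp) ord) + 2)"
  unfolding lar_run_def lar_greedy_def foldl_lar_step out_def em_def Lf_def by (simp add: Let_def)

lemma LAR_eq: "LAR V f c B p \<alpha> ord = map_pmf (\<lambda>b. lar_run V f c B \<alpha> ord (Vpb b)) \<Omega>"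
  unfolding LAR_def sample_pmf_def \<Omega>_def Vpb_def V1_def by (simp add: pmf.map_comp o_def)

lemma Lf_half: assumes "Vp \<subseteq> V1" shows "\<And>e. e \<in> set (Lf Vp) \<Longrightarrow> c e \<le> B / 2"
  using Lf_Vp assms unfolding V1_def V_half_def by auto

lemma part1:
  assumes ne: "V \<noteq> {}" and "(S, q) \<in> set_pmf (LAR V f c B p \<alpha> ord)"
  shows "real q \<le> 5 * real (card V) \<and> cost c S \<le> B"
proof -
  obtain b where "(S, q) = lar_run V f c B \<alpha> ord (Vpb b)" using assms(2) unfolding LAR_eq by auto
  then have Sq: "S = out (Vpb b)" "q = card V + 2 * length (filter (\<lambda>e. e \<in> Vpb b) ord) + 2"
    using lar_run_eq by auto
  have cV: "card V \<ge> 1" using ne finV by (simp add: Suc_le_eq card_gt_0_iff)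
  have "length (filter (\<lambda>e. e \<in> Vpb b) ord) \<le> card V"
    using length_filter_le[of _ ord] distinct_card[OF dist] setord by simp
  then have "q \<le> 5 * card V" using Sq cV by simp
  then have 1: "real q \<le> 5 * real (card V)" by (metis of_nat_le_iff of_nat_mult of_nat_numeral)
  have sub: "Vpb b \<subseteq> V1" unfolding Vpb_def by auto
  have "cost c (lar_suffix c B (Lf (Vpb b))) \<le> B"
    using suffix_sel(2)[OF Lf_good Lf_dist Lf_V Lf_half[OF sub]] .
  moreover have "cost c {em} \<le> B" using em_prop[OF ne] cleB by (simp add: cost_def)
  ultimately have "cost c S \<le> B" unfolding Sq out_def by auto
  then show ?thesis using 1 by simp
qed

lemma out_ge: assumes ne: "V \<noteq> {}"
  shows "f (lar_suffix c B (Lf (Vpb b))) \<le> f (out (Vpb b))" "f {em} \<le> f (out (Vpb b))"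
        "f (out (Vpb b)) \<ge> 0"
proof -
  show "f (lar_suffix c B (Lf (Vpb b))) \<le> f (out (Vpb b))" "f {em} \<le> f (out (Vpb b))"
    unfolding out_def by auto
  have sub: "Vpb b \<subseteq> V1" unfolding Vpb_def by auto
  have "lar_suffix c B (Lf (Vpb b)) \<subseteq> V"
    using suffix_sel(3)[OF Lf_good Lf_dist Lf_V Lf_half[OF sub]] Lf_V by blast
  moreover have "{em} \<subseteq> V" using em_prop[OF ne] by auto
  ultimately show "f (out (Vpb b)) \<ge> 0" unfolding out_def using fnn by auto
qed

lemma exp_eq: "measure_pmf.expectation (LAR V f c B p \<alpha> ord) (\<lambda>(S, q). f S)
   = measure_pmf.expectation \<Omega> (\<lambda>b. f (out (Vpb b)))"
  unfolding LAR_eq by (simp add: lar_run_eq)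

lemma ES_bound: assumes ne: "V \<noteq> {}"
  shows "measure_pmf.expectation \<Omega> (\<lambda>b. f (Sb b)) \<le> (1 + 2 / \<alpha>) * measure_pmf.expectation \<Omega> (\<lambda>b. f (out (Vpb b)))"
proof -
  have "measure_pmf.expectation \<Omega> (\<lambda>b. f (Sb b)) \<le> measure_pmf.expectation \<Omega> (\<lambda>b. (1 + 2 / \<alpha>) * f (out (Vpb b)))"
  proof (rule integral_mono[OF int\<Omega> int\<Omega>])
    fix b
    have sub: "Vpb b \<subseteq> V1" unfolding Vpb_def by auto
    have "f (Sb b) \<le> (1 + 2 / \<alpha>) * f (lar_suffix c B (Lf (Vpb b)))"
      unfolding Sb_def using suffix_sel(1)[OF Lf_good Lf_dist Lf_V Lf_half[OF sub]] .
    also have "\<dots> \<le> (1 + 2 / \<alpha>) * f (out (Vpb b))"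
      using out_ge[OF ne] apos by (intro mult_left_mono) auto
    finally show "f (Sb b) \<le> (1 + 2 / \<alpha>) * f (out (Vpb b))" .
  qed
  then show ?thesis by simp
qed

lemma final_bound:
  assumes ne: "V \<noteq> {}"
    and K1: "(1 + \<alpha> + (1 - p) / p) * (1 + 2 / \<alpha>) / (1 - p) \<le> K"
    and K2: "(1 + \<alpha> / 2 + (1 - p) / p) * (1 + 2 / \<alpha>) / (1 - p) + 1 \<le> K"
  shows "opt V f c B \<le> K * measure_pmf.expectation (LAR V f c B p \<alpha> ord) (\<lambda>(S, q). f S)"
proof -
  define EO where "EO = measure_pmf.expectation \<Omega> (\<lambda>b. f (out (Vpb b)))"
  define ES where "ES = measure_pmf.expectation \<Omega> (\<lambda>b. f (Sb b))"
  have EO0: "EO \<ge> 0" unfolding EO_def using out_ge[OF ne] by (intro integral_nonneg_AE) auto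
  have ES0: "ES \<ge> 0" unfolding ES_def Sb_def using Lf_V fnn by (intro integral_nonneg_AE) auto
  have ESb: "ES \<le> (1 + 2 / \<alpha>) * EO" unfolding ES_def EO_def using ES_bound[OF ne] .
  have emO: "f {em} \<le> EO"
  proof -
    have "measure_pmf.expectation \<Omega> (\<lambda>b. f {em}) \<le> EO"
      unfolding EO_def by (rule integral_mono[OF int\<Omega> int\<Omega>]) (rule out_ge(2)[OF ne])
    then show ?thesis by simp
  qed
  have finT: "finite {f T | T. T \<subseteq> V \<and> cost c T \<le> B}"
  proof -
    have "{f T | T. T \<subseteq> V \<and> cost c T \<le> B} \<subseteq> f ` Pow V" by auto
    then show ?thesis using finV finite_subset by blast
  qed
  have "f {} \<in> {f T | T. T \<subseteq> V \<and> cost c T \<le> B}" using Bpos by (auto simp: cost_def)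
  then have "opt V f c B \<in> {f T | T. T \<subseteq> V \<and> cost c T \<le> B}"
    unfolding opt_def by (intro Max_in finT) auto
  then obtain Ot where OV: "Ot \<subseteq> V" and Oc: "cost c Ot \<le> B" and opt: "opt V f c B = f Ot" by auto
  define O1 where "O1 = Ot \<inter> V1"
  define O2 where "O2 = Ot - V1"
  have O1V1: "O1 \<subseteq> V1" unfolding O1_def by auto
  have O12: "Ot = O1 \<union> O2" unfolding O1_def O2_def by auto
  have O1V: "O1 \<subseteq> V" and O2V: "O2 \<subseteq> V" using OV unfolding O1_def O2_def by auto
  have finO: "finite O1" "finite O2" using O1V O2V finV finite_subset by auto
  have cO: "cost c Ot = cost c O1 + cost c O2"
    unfolding O12 cost_def by (rule sum.union_disjoint) (use finO in \<open>auto simp: O1_def O2_def\<close>)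
  have cnn: "\<And>X. X \<subseteq> V \<Longrightarrow> cost c X \<ge> 0"
    unfolding cost_def using cpos by (intro sum_nonneg) (fastforce intro: less_imp_le)
  have big: "\<And>x. x \<in> O2 \<Longrightarrow> c x > B / 2" using O2V unfolding O2_def V1_def V_half_def by auto
  have fO: "f Ot \<le> f O1 + f O2" unfolding O12 using subadd[OF O1V O2V] .
  have mb: "(1 - p) * f O1 \<le> (1 + \<alpha> * cost c O1 / B + (1 - p) / p) * ES"
    unfolding ES_def by (rule main_bound[OF O1V1])
  have pp: "1 - p > 0" using p1 by simp
  have q0: "(1 - p) / p \<ge> 0" using p0 p1 by simp
  show ?thesis
  proof (cases "O2 = {}")
    case True
    have "cost c O1 \<le> B" using cO Oc True by (simp add: cost_def)
    then have "\<alpha> * cost c O1 / B \<le> \<alpha>" using apos Bpos by (simp add: divide_le_eq)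
    then have "(1 - p) * f O1 \<le> (1 + \<alpha> + (1 - p) / p) * ES"
      using mb ES0 by (meson add_le_cancel_right add_left_mono mult_right_mono order_trans)
    also have "\<dots> \<le> (1 + \<alpha> + (1 - p) / p) * ((1 + 2 / \<alpha>) * EO)"
      using ESb apos q0 by (intro mult_left_mono) auto
    finally have "(1 - p) * f O1 \<le> (1 + \<alpha> + (1 - p) / p) * ((1 + 2 / \<alpha>) * EO)" .
    then have "f O1 \<le> (1 + \<alpha> + (1 - p) / p) * ((1 + 2 / \<alpha>) * EO) / (1 - p)"
      using pp by (simp add: pos_le_divide_eq mult.commute)
    also have "\<dots> = (1 + \<alpha> + (1 - p) / p) * (1 + 2 / \<alpha>) / (1 - p) * EO" by simp
    finally have "f O1 \<le> (1 + \<alpha> + (1 - p) / p) * (1 + 2 / \<alpha>) / (1 - p) * EO" .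
    also have "\<dots> \<le> K * EO" using K1 EO0 by (intro mult_right_mono) auto
    finally show ?thesis using opt fO True f_empty exp_eq EO_def by simp
  next
    case False
    then obtain x where x: "x \<in> O2" by auto
    have O2x: "O2 = {x}"
    proof (rule ccontr)
      assume "O2 \<noteq> {x}"
      then obtain y where y: "y \<in> O2" "y \<noteq> x" using x by auto
      have "cost c O2 = c x + cost c (O2 - {x})" unfolding cost_def using x finO
        by (simp add: sum.remove)
      also have "cost c (O2 - {x}) = c y + cost c (O2 - {x} - {y})" unfolding cost_def using y finO
        by (simp add: sum.remove)
      finally have "cost c O2 = c x + c y + cost c (O2 - {x} - {y})" by simp
      moreover have "cost c (O2 - {x} - {y}) \<ge> 0" using O2V by (intro cnn) auto
      moreover have "cost c O1 \<ge> 0" using O1V by (intro cnn) auto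
      ultimately show False using big[OF x] big[OF y(1)] cO Oc by linarith
    qed
    have "cost c O1 \<le> B / 2" using cO Oc O2x big[OF x] by (simp add: cost_def)
    then have "\<alpha> * cost c O1 / B \<le> \<alpha> / 2" using apos Bpos by (simp add: divide_le_eq)
    then have "(1 - p) * f O1 \<le> (1 + \<alpha> / 2 + (1 - p) / p) * ES"
      using mb ES0 by (meson add_le_cancel_right add_left_mono mult_right_mono order_trans)
    also have "\<dots> \<le> (1 + \<alpha> / 2 + (1 - p) / p) * ((1 + 2 / \<alpha>) * EO)"
      using ESb apos q0 by (intro mult_left_mono) auto
    finally have "(1 - p) * f O1 \<le> (1 + \<alpha> / 2 + (1 - p) / p) * ((1 + 2 / \<alpha>) * EO)" .
    then have "f O1 \<le> (1 + \<alpha> / 2 + (1 - p) / p) * ((1 + 2 / \<alpha>) * EO) / (1 - p)"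
      using pp by (simp add: pos_le_divide_eq mult.commute)
    also have "\<dots> = (1 + \<alpha> / 2 + (1 - p) / p) * (1 + 2 / \<alpha>) / (1 - p) * EO" by simp
    finally have "f O1 \<le> (1 + \<alpha> / 2 + (1 - p) / p) * (1 + 2 / \<alpha>) / (1 - p) * EO" .
    moreover have "f O2 \<le> EO" using O2x em_prop[OF ne] x O2V emO by fastforce
    ultimately have "f Ot \<le> ((1 + \<alpha> / 2 + (1 - p) / p) * (1 + 2 / \<alpha>) / (1 - p) + 1) * EO"
      using fO by (simp add: algebra_simps)
    also have "\<dots> \<le> K * EO" using K2 EO0 by (intro mult_right_mono) auto
    finally show ?thesis using opt exp_eq EO_def by simp
  qed
qed

end

lemma numerics:
  defines "p \<equiv> sqrt 2 - 1" and "\<alpha> \<equiv> sqrt (2 + 2 * sqrt 2)"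
  shows "0 < p" "p < 1" "\<alpha> > 0"
    "(1 + \<alpha> + (1 - p) / p) * (1 + 2 / \<alpha>) / (1 - p) \<le> 16.034"
    "(1 + \<alpha> / 2 + (1 - p) / p) * (1 + 2 / \<alpha>) / (1 - p) + 1 \<le> 16.034"
proof -
  define s where "s = sqrt 2"
  have s1: "1.4142 < s" unfolding s_def by (rule real_less_rsqrt) (simp add: power2_eq_square)
  have s2: "s < 1.41422"
  proof -
    have "sqrt 2 < sqrt (1.41422^2)" by (intro real_sqrt_less_mono) (simp add: power2_eq_square)
    then show ?thesis unfolding s_def by simp
  qed
  have a1: "2.1973 < \<alpha>" unfolding \<alpha>_def s_def[symmetric] by (rule real_less_rsqrt) (use s1 in \<open>simp add: power2_eq_square\<close>)
  have a2: "\<alpha> < 2.1974" unfolding \<alpha>_def s_def[symmetric]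
  proof -
    have "sqrt (2 + 2 * s) < sqrt (2.1974^2)" using s2 by (intro real_sqrt_less_mono) (simp add: power2_eq_square)
    then show "sqrt (2 + 2 * s) < 2.1974" by simp
  qed
  have pe: "p = s - 1" unfolding p_def s_def by simp
  show "0 < p" "p < 1" using s1 s2 pe by auto
  show "\<alpha> > 0" using a1 by simp
  have b1: "(1 - p) / p \<le> 1.4143" using s1 s2 pe by (simp add: divide_le_eq)
  have b2: "2 / \<alpha> \<le> 0.9103" using a1 by (simp add: divide_le_eq)
  have b3: "1 / (1 - p) \<le> 1.7075" using s1 s2 pe by (simp add: divide_le_eq)
  have q0: "(1 - p) / p \<ge> 0" using s1 s2 pe by simp
  have r0: "1 / (1 - p) \<ge> 0" using s1 s2 pe by simp
  have c1: "1 + \<alpha> + (1 - p) / p \<le> 1 + 2.1974 + 1.4143" using a2 b1 by linarith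
  have c1': "1 + \<alpha> / 2 + (1 - p) / p \<le> 1 + 1.0987 + 1.4143" using a2 b1 by linarith
  have c2: "1 + 2 / \<alpha> \<le> 1 + 0.9103" using b2 by linarith
  have a0: "\<alpha> > 0" using a1 by simp
  have "(1 + \<alpha> + (1 - p) / p) * (1 + 2 / \<alpha>) / (1 - p) = (1 + \<alpha> + (1 - p) / p) * (1 + 2 / \<alpha>) * (1 / (1 - p))"
    by simp
  also have "\<dots> \<le> (1 + 2.1974 + 1.4143) * (1 + 0.9103) * 1.7075"
    by (intro mult_mono c1 c2 b3) (use a0 q0 r0 in auto)
  finally show "(1 + \<alpha> + (1 - p) / p) * (1 + 2 / \<alpha>) / (1 - p) \<le> 16.034" by (rule order_trans) simp
  have "(1 + \<alpha> / 2 + (1 - p) / p) * (1 + 2 / \<alpha>) / (1 - p) = (1 + \<alpha> / 2 + (1 - p) / p) * (1 + 2 / \<alpha>) * (1 / (1 - p))"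
    by simp
  also have "\<dots> \<le> (1 + 1.0987 + 1.4143) * (1 + 0.9103) * 1.7075"
    by (intro mult_mono c1' c2 b3) (use a0 q0 r0 in auto)
  finally have "(1 + \<alpha> / 2 + (1 - p) / p) * (1 + 2 / \<alpha>) / (1 - p) \<le> 15.034" by (rule order_trans) simp
  then show "(1 + \<alpha> / 2 + (1 - p) / p) * (1 + 2 / \<alpha>) / (1 - p) + 1 \<le> 16.034" by simp
qed

theorem theorem2:
  "\<exists>C::real. \<forall>(V::'a set) f c B ord.
       finite V \<longrightarrow> V \<noteq> {} \<longrightarrow> nonneg_submodular V f \<longrightarrow>
       (\<forall>e\<in>V. c e > 0 \<and> c e \<le> B) \<longrightarrow> B > 0 \<longrightarrow>
       distinct ord \<longrightarrow> set ord = V \<longrightarrow>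
       (let D = LAR V f c B (sqrt 2 - 1) (sqrt (2 + 2 * sqrt 2)) ord in
         (\<forall>(S, q) \<in> set_pmf D. real q \<le> C * real (card V) \<and> cost c S \<le> B) \<and>
         opt V f c B \<le> 16.034 * measure_pmf.expectation D (\<lambda>(S, q). f S))"
proof (intro exI[of _ 5] allI impI)
  fix V :: "'a set" and f :: "'a set \<Rightarrow> real" and c :: "'a \<Rightarrow> real" and B :: real and ord :: "'a list"
  assume finV: "finite V" and ne: "V \<noteq> {}" and sub: "nonneg_submodular V f"
    and cc: "\<forall>e\<in>V. c e > 0 \<and> c e \<le> B" and Bp: "B > 0" and di: "distinct ord" and so: "set ord = V"
  note nm = numerics
  interpret L: larP V f c B "sqrt (2 + 2 * sqrt 2)" ord "sqrt 2 - 1"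
    using finV sub cc Bp di so nm(1-3) by unfold_locales auto
  have 1: "\<forall>(S, q) \<in> set_pmf (LAR V f c B (sqrt 2 - 1) (sqrt (2 + 2 * sqrt 2)) ord).
      real q \<le> 5 * real (card V) \<and> cost c S \<le> B"
    using L.part1[OF ne] by auto
  have 2: "opt V f c B \<le> 16.034 * measure_pmf.expectation (LAR V f c B (sqrt 2 - 1) (sqrt (2 + 2 * sqrt 2)) ord) (\<lambda>(S, q). f S)"
    by (rule L.final_bound[OF ne nm(4) nm(5)])
  show "let D = LAR V f c B (sqrt 2 - 1) (sqrt (2 + 2 * sqrt 2)) ord in
         (\<forall>(S, q) \<in> set_pmf D. real q \<le> 5 * real (card V) \<and> cost c S \<le> B) \<and>
         opt V f c B \<le> 16.034 * measure_pmf.expectation D (\<lambda>(S, q). f S)"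
    unfolding Let_def using 1 2 by blast
qed

end
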